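(* Let $G=(V,E,w)$ be an undirected graph with positive real edge weights, $s\in V$, $f\ge1$ an integer, and let $T$, $w'$, $H$ be as in the context. Let $F\subseteq E$ with $|F|\le f$, and let $t\in V$ be a vertex reachable from $s$ in $G-F$. Let $M$ be a minimum spanning forest of $H-F$ with respect to $w'$, let $\pi'$ be the unique path from $s$ to $t$ in $M$, and let $N'$ be the set of new edges of $\pi'$. Then $$d_{H-F}(t)\le w(\pi')\le \sum_{e\in N'} w'(e)+d_G(t).$$
   Context: For a subgraph $X$ of $G$, $d_X(u,u')$ is the distance between $u,u'$ in $X$ with respect to $w$, and $d_X(u)=d_X(s,u)$; $w(\pi)$ is the total $w$-weight of a path $\pi$. $T$ is a shortest-path tree of $G$ rooted at $s$. Define $w'(u,v)=0$ if $(u,v)\in E(T)$ and $w'(u,v)=d_T(u)+w(u,v)+d_T(v)$ otherwise; $G'=(V,E,w')$. Set $G_0=G'$; for $i=0,\dots,f$ let $M_i$ be the edge set of a minimum spanning forest of $G_i$ with respect to $w'$ and $G_{i+1}=G_i$ minus the edges of $M_i$. $H$ is the spanning subgraph of $G$ with edge set $\bigcup_{i=0}^f M_i$. $X-F$ denotes $X$ with the edges of $F$ removed. An edge is called new (with respect to $F$) if its endpoints lie in different connected components of the forest $T-F$. *)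

theory Defs
  imports Complex_Main "HOL-Library.Extended_Real"
begin

definition edges_ok :: "'v set \<Rightarrow> 'v set set \<Rightarrow> bool" where
  "edges_ok V E \<longleftrightarrow> (\<forall>e\<in>E. \<exists>u v. u \<noteq> v \<and> u \<in> V \<and> v \<in> V \<and> e = {u, v})"

fun path_edges :: "'v list \<Rightarrow> 'v set list" where
  "path_edges (x # y # xs) = {x, y} # path_edges (y # xs)"
| "path_edges _ = []"

definition is_walk :: "'v set \<Rightarrow> 'v set set \<Rightarrow> 'v list \<Rightarrow> bool" where
  "is_walk V X p \<longleftrightarrow> p \<noteq> [] \<and> set p \<subseteq> V \<and> set (path_edges p) \<subseteq> X"

definition is_path :: "'v set \<Rightarrow> 'v set set \<Rightarrow> 'v \<Rightarrow> 'v \<Rightarrow> 'v list \<Rightarrow> bool" where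
  "is_path V X u v p \<longleftrightarrow> is_walk V X p \<and> distinct p \<and> hd p = u \<and> last p = v"

definition connected_in :: "'v set \<Rightarrow> 'v set set \<Rightarrow> 'v \<Rightarrow> 'v \<Rightarrow> bool" where
  "connected_in V X u v \<longleftrightarrow> (\<exists>p. is_path V X u v p)"

definition path_weight :: "('v set \<Rightarrow> real) \<Rightarrow> 'v list \<Rightarrow> real" where
  "path_weight w p = sum_list (map w (path_edges p))"

text \<open>d_X(u,v): distance in the subgraph (V,X) w.r.t. w (\<infinity> if unreachable).\<close>
definition dist :: "'v set \<Rightarrow> 'v set set \<Rightarrow> ('v set \<Rightarrow> real) \<Rightarrow> 'v \<Rightarrow> 'v \<Rightarrow> ereal" where
  "dist V X w u v = (INF p \<in> {p. is_path V X u v p}. ereal (path_weight w p))"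

definition is_cycle :: "'v set \<Rightarrow> 'v set set \<Rightarrow> 'v list \<Rightarrow> bool" where
  "is_cycle V X c \<longleftrightarrow> length c \<ge> 3 \<and> distinct c \<and> is_walk V X c \<and> {last c, hd c} \<in> X"

definition acyclic_edges :: "'v set \<Rightarrow> 'v set set \<Rightarrow> bool" where
  "acyclic_edges V X \<longleftrightarrow> \<not> (\<exists>c. is_cycle V X c)"

definition spanning_forest :: "'v set \<Rightarrow> 'v set set \<Rightarrow> 'v set set \<Rightarrow> bool" where
  "spanning_forest V X M \<longleftrightarrow> M \<subseteq> X \<and> acyclic_edges V M \<and>
     (\<forall>u\<in>V. \<forall>v\<in>V. connected_in V X u v \<longrightarrow> connected_in V M u v)"

definition min_spanning_forest ::
  "'v set \<Rightarrow> 'v set set \<Rightarrow> ('v set \<Rightarrow> real) \<Rightarrow> 'v set set \<Rightarrow> bool" where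
  "min_spanning_forest V X c M \<longleftrightarrow> spanning_forest V X M \<and>
     (\<forall>M'. spanning_forest V X M' \<longrightarrow> sum c M \<le> sum c M')"

definition sp_tree :: "'v set \<Rightarrow> 'v set set \<Rightarrow> ('v set \<Rightarrow> real) \<Rightarrow> 'v \<Rightarrow> 'v set set \<Rightarrow> bool" where
  "sp_tree V E w s T \<longleftrightarrow> T \<subseteq> E \<and> acyclic_edges V T \<and>
     (\<forall>u\<in>V. \<forall>v\<in>V. connected_in V T u v) \<and>
     (\<forall>v\<in>V. dist V T w s v = dist V E w s v)"

definition w_prime :: "'v set \<Rightarrow> 'v set set \<Rightarrow> ('v set \<Rightarrow> real) \<Rightarrow> 'v \<Rightarrow> 'v set \<Rightarrow> real" where
  "w_prime V T w s e = (if e \<in> T then 0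
      else w e + (\<Sum>u\<in>e. real_of_ereal (dist V T w s u)))"

definition new_edge :: "'v set \<Rightarrow> 'v set set \<Rightarrow> 'v set set \<Rightarrow> 'v set \<Rightarrow> bool" where
  "new_edge V T F e \<longleftrightarrow> (\<exists>u v. e = {u, v} \<and> \<not> connected_in V (T - F) u v)"

end

theory Submission
  imports Defs
begin

lemma path_edges_append:
  "path_edges (xs @ y # ys) = path_edges (xs @ [y]) @ path_edges (y # ys)"
  by (induction xs rule: path_edges.induct) auto

lemma path_edges_append2:
  assumes "xs \<noteq> []" "ys \<noteq> []"
  shows "path_edges (xs @ ys) = path_edges xs @ {last xs, hd ys} # path_edges ys"
proof -
  obtain xs' a where xs: "xs = xs' @ [a]" using assms(1) by (cases xs rule: rev_cases) auto
  obtain b ys' where ys: "ys = b # ys'" using assms(2) by (cases ys) auto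
  have "path_edges (xs @ ys) = path_edges (xs' @ [a]) @ path_edges (a # b # ys')"
    using path_edges_append[of xs' a "b # ys'"] by (simp add: xs ys)
  then show ?thesis by (simp add: xs ys)
qed

lemma path_edges_rev: "path_edges (rev xs) = rev (path_edges xs)"
proof (induction xs rule: path_edges.induct)
  case (1 x y xs)
  have "path_edges (rev (x # y # xs)) = path_edges (rev (y # xs) @ [x])" by simp
  also have "\<dots> = path_edges (rev (y # xs)) @ {last (rev (y#xs)), hd [x]} # path_edges [x]"
    by (rule path_edges_append2) auto
  also have "\<dots> = rev (path_edges (y # xs)) @ [{y, x}]" using 1 by simp
  finally show ?case by (simp add: insert_commute)
qed auto

lemma path_edges_sub: "e \<in> set (path_edges p) \<Longrightarrow> e \<subseteq> set p"
  by (induction p rule: path_edges.induct) auto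

lemma path_edges_distinct: "distinct p \<Longrightarrow> distinct (path_edges p)"
  by (induction p rule: path_edges.induct) (auto dest: path_edges_sub)

lemma path_edges_decomp:
  "e \<in> set (path_edges p) \<Longrightarrow> \<exists>p1 p2. p = p1 @ p2 \<and> p1 \<noteq> [] \<and> p2 \<noteq> [] \<and> e = {last p1, hd p2}"
proof (induction p rule: path_edges.induct)
  case (1 x y xs)
  show ?case
  proof (cases "e = {x,y}")
    case True then show ?thesis by (intro exI[of _ "[x]"] exI[of _ "y#xs"]) auto
  next
    case False
    then have "e \<in> set (path_edges (y # xs))" using 1(2) by simp
    then obtain p1 p2 where "y # xs = p1 @ p2" "p1 \<noteq> []" "p2 \<noteq> []" "e = {last p1, hd p2}"
      using 1(1) by blast
    then show ?thesis by (intro exI[of _ "x # p1"] exI[of _ p2]) auto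
  qed
qed auto

lemma path_weight_append2:
  "xs \<noteq> [] \<Longrightarrow> ys \<noteq> [] \<Longrightarrow>
   path_weight w (xs @ ys) = path_weight w xs + w {last xs, hd ys} + path_weight w ys"
  by (simp add: path_weight_def path_edges_append2)

lemma path_weight_rev: "path_weight w (rev p) = path_weight w p"
  by (simp add: path_weight_def path_edges_rev rev_map[symmetric] sum_list_rev)

lemma path_weight_glue:
  assumes "p \<noteq> []" "q \<noteq> []" "last p = hd q"
  shows "path_weight w (p @ tl q) = path_weight w p + path_weight w q"
proof -
  obtain b q' where q: "q = b # q'" using assms by (cases q) auto
  show ?thesis
  proof (cases q')
    case Nil then show ?thesis by (simp add: q path_weight_def)
  next
    case (Cons c r)
    show ?thesis using assms path_weight_append2[of p q' w]
      by (simp add: q Cons path_weight_def)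
  qed
qed

lemma walk_mono: "is_walk V X p \<Longrightarrow> X \<subseteq> Y \<Longrightarrow> is_walk V Y p"
  by (auto simp: is_walk_def)

lemma walk_rev: "is_walk V X p \<Longrightarrow> is_walk V X (rev p)"
  by (auto simp: is_walk_def path_edges_rev)

lemma walk_glue:
  assumes "is_walk V X p" "is_walk V X q" "last p = hd q"
  shows "is_walk V X (p @ tl q)"
proof -
  obtain b q' where q: "q = b # q'" using assms by (cases q) (auto simp: is_walk_def)
  show ?thesis
  proof (cases q')
    case Nil then show ?thesis using assms by (simp add: q)
  next
    case (Cons c r)
    have "p \<noteq> []" using assms by (auto simp: is_walk_def)
    then show ?thesis using assms
      by (auto simp: q Cons is_walk_def path_edges_append2)
  qed
qed

lemma glue_last: "q \<noteq> [] \<Longrightarrow> last p = hd q \<Longrightarrow> last (p @ tl q) = last q"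
  by (cases q) auto

lemma walk_to_path:
  assumes "is_walk V X p" "\<forall>e\<in>X. w e \<ge> 0"
  shows "\<exists>q. is_path V X (hd p) (last p) q \<and> path_weight w q \<le> path_weight w p"
  using assms(1)
proof (induction "length p" arbitrary: p rule: less_induct)
  case less
  show ?case
  proof (cases "distinct p")
    case True thus ?thesis using less.prems by (auto simp: is_path_def)
  next
    case False
    then obtain xs ys zs y where p: "p = xs @ [y] @ ys @ [y] @ zs"
      using not_distinct_decomp by blast
    let ?p' = "xs @ y # zs"
    have e1: "path_edges p = path_edges (xs @ [y]) @ path_edges (y # ys @ [y]) @ path_edges (y # zs)"
      using path_edges_append[of xs y "ys @ y # zs"] path_edges_append[of "y # ys" y zs] p by simp
    have e2: "path_edges ?p' = path_edges (xs @ [y]) @ path_edges (y # zs)"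
      using path_edges_append[of xs y zs] by simp
    have wk: "is_walk V X ?p'" using less.prems e1 e2 p by (auto simp: is_walk_def)
    have "sum_list (map w (path_edges (y # ys @ [y]))) \<ge> 0"
      using less.prems assms(2) e1 by (intro sum_list_nonneg) (auto simp: is_walk_def)
    then have wt: "path_weight w ?p' \<le> path_weight w p"
      using e1 e2 by (simp add: path_weight_def)
    have "length ?p' < length p" using p by simp
    then obtain q where q: "is_path V X (hd ?p') (last ?p') q" "path_weight w q \<le> path_weight w ?p'"
      using less.hyps wk by blast
    have "hd ?p' = hd p" "last ?p' = last p" using p by (cases xs; simp)+
    then show ?thesis using q wt by auto
  qed
qed

lemma walk_connected: "is_walk V X p \<Longrightarrow> connected_in V X (hd p) (last p)"
  using walk_to_path[of V X p "\<lambda>_. 0"] by (auto simp: connected_in_def)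

lemma connected_refl: "u \<in> V \<Longrightarrow> connected_in V X u u"
  unfolding connected_in_def is_path_def is_walk_def by (intro exI[of _ "[u]"]) auto

lemma path_rev: "is_path V X u v p \<Longrightarrow> is_path V X v u (rev p)"
  by (auto simp: is_path_def hd_rev last_rev is_walk_def path_edges_rev)

lemma connected_sym: "connected_in V X u v \<Longrightarrow> connected_in V X v u"
  using path_rev connected_in_def by metis

lemma connected_trans:
  assumes "connected_in V X u v" "connected_in V X v x" shows "connected_in V X u x"
proof -
  obtain p q where p: "is_path V X u v p" and q: "is_path V X v x q"
    using assms connected_in_def by metis
  have "is_walk V X (p @ tl q)" using p q walk_glue[of V X p q] by (auto simp: is_path_def)
  moreover have "hd (p @ tl q) = u" "last (p @ tl q) = x" using p q glue_last[of q p]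
    by (auto simp: is_path_def is_walk_def)
  ultimately show ?thesis using walk_connected by fastforce
qed

lemma connected_mono: "connected_in V X u v \<Longrightarrow> X \<subseteq> Y \<Longrightarrow> connected_in V Y u v"
  by (auto simp: connected_in_def is_path_def intro: walk_mono)

lemma connected_V: "connected_in V X u v \<Longrightarrow> u \<in> V \<and> v \<in> V"
  by (auto simp: connected_in_def is_path_def is_walk_def)

lemma edge_connected: "{x,y} \<in> X \<Longrightarrow> x \<in> V \<Longrightarrow> y \<in> V \<Longrightarrow> connected_in V X x y"
proof (cases "x = y")
  case True then show "x \<in> V \<Longrightarrow> ?thesis" by (simp add: connected_refl)
next
  case False
  assume "{x,y} \<in> X" "x \<in> V" "y \<in> V"
  then show ?thesis using False unfolding connected_in_def is_path_def is_walk_def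
    by (intro exI[of _ "[x,y]"]) auto
qed

lemma connected_lift_walk:
  assumes "\<And>x y. {x,y} \<in> X \<Longrightarrow> x \<in> V \<Longrightarrow> y \<in> V \<Longrightarrow> connected_in V Y x y"
  shows "is_walk V X p \<Longrightarrow> connected_in V Y (hd p) (last p)"
proof (induction p rule: path_edges.induct)
  case (1 x y xs)
  then have "is_walk V X (y # xs)" "{x,y} \<in> X" "x \<in> V" "y \<in> V" by (auto simp: is_walk_def)
  then have "connected_in V Y x y" "connected_in V Y y (last (y # xs))" using 1(1) assms by auto
  then show ?case using connected_trans by fastforce
qed (auto simp: is_walk_def intro: connected_refl)

lemma connected_lift:
  assumes "\<And>x y. {x,y} \<in> X \<Longrightarrow> x \<in> V \<Longrightarrow> y \<in> V \<Longrightarrow> connected_in V Y x y"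
    and "connected_in V X a b"
  shows "connected_in V Y a b"
  using assms connected_lift_walk[OF assms(1)] by (fastforce simp: connected_in_def is_path_def)

lemma path_same_ends: "is_path V X u u p \<Longrightarrow> p = [u]"
proof -
  assume P: "is_path V X u u p"
  then obtain a p' where p: "p = a # p'" by (cases p) (auto simp: is_path_def is_walk_def)
  show ?thesis
  proof (cases p')
    case Nil then show ?thesis using P p by (simp add: is_path_def)
  next
    case (Cons b r)
    then have "last p \<in> set p'" using p by simp
    moreover have "a \<notin> set p'" using P p by (auto simp: is_path_def)
    moreover have "last p = a" using P p by (auto simp: is_path_def)
    ultimately show ?thesis by simp
  qed
qed


lemma acyc_no_alt:
  assumes "acyclic_edges V X" "{x,y} \<in> X" "x \<noteq> y" "connected_in V (X - {{x,y}}) x y"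
  shows False
proof -
  obtain P where P: "is_path V (X - {{x,y}}) x y P" using assms(4) unfolding connected_in_def by blast
  show False
  proof (cases "length P \<ge> 3")
    case True
    have "is_cycle V X P" unfolding is_cycle_def
      using True P assms(2) walk_mono[of V "X - {{x,y}}" P X]
      by (auto simp: is_path_def insert_commute)
    then show False using assms(1) by (auto simp: acyclic_edges_def)
  next
    case False
    have hl: "hd P = x" "last P = y" "P \<noteq> []" using P by (auto simp: is_path_def is_walk_def)
    then obtain a P1 where a: "P = a # P1" by (cases P) auto
    have "P1 \<noteq> []" using a hl assms(3) by auto
    then obtain b P2 where b: "P1 = b # P2" by (cases P1) auto
    have "P2 = []" using False a b by (cases P2) auto
    then have "P = [x,y]" using a b hl by simp
    then show False using P by (auto simp: is_path_def is_walk_def)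
  qed
qed


lemma closing_not_edge:
  assumes "distinct c" "length c \<ge> 3"
  shows "{last c, hd c} \<notin> set (path_edges c)"
proof -
  obtain a b c' where c: "c = a # b # c'" "c' \<noteq> []" using assms(2)
    by (cases c; cases "tl c"; cases "tl (tl c)") auto
  have l: "last c = last c'" using c by simp
  have "last c' \<in> set c'" using c by simp
  then have n1: "last c' \<noteq> a" "last c' \<noteq> b" using assms(1) c by auto
  show ?thesis
  proof
    assume "{last c, hd c} \<in> set (path_edges c)"
    then have "{last c', a} = {a, b} \<or> {last c', a} \<in> set (path_edges (b # c'))"
      using c l by simp
    then show False
    proof
      assume "{last c', a} = {a, b}" then show False using n1 by (auto simp: doubleton_eq_iff)
    next
      assume "{last c', a} \<in> set (path_edges (b # c'))"
      then have "a \<in> set (b # c')" using path_edges_sub by blast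
      then show False using assms(1) c by simp
    qed
  qed
qed


lemma path_eq_edges:
  "distinct p \<Longrightarrow> distinct q \<Longrightarrow> p \<noteq> [] \<Longrightarrow> q \<noteq> [] \<Longrightarrow> hd p = hd q
   \<Longrightarrow> set (path_edges p) = set (path_edges q) \<Longrightarrow> p = q"
proof (induction p arbitrary: q rule: path_edges.induct)
  case (1 a x p'')
  obtain q' where q: "q = a # q'" using 1 by (cases q) auto
  have ax: "{a,x} \<in> set (path_edges q)" by (subst 1(7)[symmetric]) simp
  then obtain y q'' where q': "q' = y # q''" using q by (cases q') auto
  have na: "a \<notin> set (y # q'')" using 1(3) q q' by simp
  have "{a,x} \<notin> set (path_edges (y # q''))" using na path_edges_sub by fastforce
  then have "{a,x} = {a,y}" using ax q q' by simp
  then have xy: "x = y" by (auto simp: doubleton_eq_iff)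
  have na2: "a \<notin> set (x # p'')" using 1(2) by simp
  have nx: "{a,x} \<notin> set (path_edges (x # p''))" using na2 path_edges_sub by blast
  have ny: "{a,y} \<notin> set (path_edges (y # q''))" using na path_edges_sub by blast
  have "set (path_edges (x # p'')) = set (path_edges (a # x # p'')) - {{a,x}}"
    using nx by auto
  also have "\<dots> = set (path_edges q) - {{a,y}}" using 1(7) xy by simp
  also have "\<dots> = set (path_edges (y # q''))" using ny q q' by auto
  finally have seq: "set (path_edges (x # p'')) = set (path_edges (y # q''))" .
  have d1: "distinct (x#p'')" using 1(2) by simp
  have d2: "distinct (y#q'')" using 1(3) q q' by simp
  have "x # p'' = y # q''" by (rule 1(1)[OF d1 d2]) (use seq xy in auto)
  then show ?case using q q' by simp
next
  case ("2_1" q) then show ?case by simp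
next
  case ("2_2" v q)
  then obtain q' where q: "q = v # q'" by (cases q) auto
  show ?case
  proof (cases q')
    case (Cons b r) then show ?thesis using "2_2" q by simp
  qed (simp add: q)
qed


lemma acyclic_mono: "acyclic_edges V Y \<Longrightarrow> X \<subseteq> Y \<Longrightarrow> acyclic_edges V X"
  by (auto simp: acyclic_edges_def is_cycle_def intro: walk_mono)



lemma cycle_edge_alt:
  assumes "is_cycle V X c" "e \<in> insert {last c, hd c} (set (path_edges c))"
  shows "\<exists>x y. e = {x,y} \<and> x \<noteq> y \<and> connected_in V (X - {e}) x y"
proof -
  have dc: "distinct c" and l3: "length c \<ge> 3" and wc: "is_walk V X c"
    and cl: "{last c, hd c} \<in> X" using assms(1) by (auto simp: is_cycle_def)
  have cne: "{last c, hd c} \<notin> set (path_edges c)" using closing_not_edge dc l3 by blast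
  show ?thesis
  proof (cases "e = {last c, hd c}")
    case True
    have "is_walk V (X - {e}) c" using wc cne True by (auto simp: is_walk_def)
    then have "connected_in V (X - {e}) (hd c) (last c)" by (rule walk_connected)
    moreover have "hd c \<noteq> last c"
    proof -
      obtain a c' where "c = a # c'" "c' \<noteq> []" using l3 by (cases c; cases "tl c") auto
      then show ?thesis using dc by auto
    qed
    ultimately show ?thesis using True by (intro exI[of _ "hd c"] exI[of _ "last c"]) (auto simp: insert_commute)
  next
    case False
    then have ec: "e \<in> set (path_edges c)" using assms(2) by simp
    then obtain c1 c2 where cc: "c = c1 @ c2" "c1 \<noteq> []" "c2 \<noteq> []" "e = {last c1, hd c2}"
      using path_edges_decomp by blast
    have pe: "path_edges c = path_edges c1 @ e # path_edges c2" using cc path_edges_append2 by simp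
    have "distinct (path_edges c)" using dc path_edges_distinct by blast
    then have n1: "e \<notin> set (path_edges c1)" "e \<notin> set (path_edges c2)" using pe by auto
    have pe2: "path_edges (c2 @ c1) = path_edges c2 @ {last c, hd c} # path_edges c1"
      using path_edges_append2[of c2 c1] cc by simp
    have "{last c, hd c} \<noteq> e" using cne ec by auto
    then have "is_walk V (X - {e}) (c2 @ c1)" using wc pe pe2 n1 cl cc
      by (auto simp: is_walk_def)
    then have "connected_in V (X - {e}) (hd (c2 @ c1)) (last (c2 @ c1))" by (rule walk_connected)
    then have "connected_in V (X - {e}) (last c1) (hd c2)" using cc connected_sym by fastforce
    moreover have "last c1 \<noteq> hd c2"
    proof -
      have "last c1 \<in> set c1" "hd c2 \<in> set c2" using cc by simp_all
      moreover have "set c1 \<inter> set c2 = {}" using dc cc by simp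
      ultimately show ?thesis by (metis disjoint_iff)
    qed
    ultimately show ?thesis using cc(4) by (intro exI[of _ "last c1"] exI[of _ "hd c2"]) simp
  qed
qed

lemma forest_path_unique:
  assumes "acyclic_edges V X" "is_path V X a b p" "is_path V X a b q"
  shows "p = q"
proof -
  have half: False if p1: "is_path V X a b p1" and q1: "is_path V X a b q1"
    and e1: "e \<in> set (path_edges p1)" and e2: "e \<notin> set (path_edges q1)" for p1 q1 e
  proof -
    obtain l r where lr: "p1 = l @ r" "l \<noteq> []" "r \<noteq> []" "e = {last l, hd r}"
      using path_edges_decomp e1 by blast
    have pe: "path_edges p1 = path_edges l @ e # path_edges r" using path_edges_append2[OF lr(2,3)] lr(1,4) by simp
    have "distinct (path_edges p1)" using p1 by (intro path_edges_distinct) (simp add: is_path_def)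
    then have nl: "e \<notin> set (path_edges l)" and nr: "e \<notin> set (path_edges r)" using pe by auto
    have eX: "e \<in> X" using p1 e1 by (auto simp: is_path_def is_walk_def)
    have xy: "last l \<noteq> hd r"
    proof -
      have "last l \<in> set l" "hd r \<in> set r" using lr by simp_all
      moreover have "distinct (l @ r)" using p1 lr by (simp add: is_path_def)
      ultimately show ?thesis by auto
    qed
    have w1: "is_walk V (X - {e}) (rev l)"
      using p1 lr nl pe by (auto simp: is_path_def is_walk_def path_edges_rev)
    have c1: "connected_in V (X - {e}) (last l) a"
      using walk_connected[OF w1] lr p1 by (simp add: is_path_def hd_rev last_rev)
    have w2: "is_walk V (X - {e}) q1" using q1 e2 by (auto simp: is_path_def is_walk_def)
    have c2: "connected_in V (X - {e}) a b" using walk_connected[OF w2] q1 by (simp add: is_path_def)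
    have w3: "is_walk V (X - {e}) r" using p1 lr nr pe by (auto simp: is_path_def is_walk_def)
    have "last r = b" using lr p1 by (simp add: is_path_def)
    then have c3: "connected_in V (X - {e}) b (hd r)"
      using walk_connected[OF w3] connected_sym by metis
    have "connected_in V (X - {e}) (last l) (hd r)" using c1 c2 c3 connected_trans by metis
    then show False using acyc_no_alt[OF assms(1)] eX lr xy by blast
  qed
  show ?thesis
  proof (rule ccontr)
    assume "p \<noteq> q"
    have "set (path_edges p) \<noteq> set (path_edges q)"
    proof
      assume "set (path_edges p) = set (path_edges q)"
      moreover have "distinct p" "distinct q" "p \<noteq> []" "q \<noteq> []" "hd p = hd q"
        using assms(2,3) by (auto simp: is_path_def is_walk_def)
      ultimately have "p = q" using path_eq_edges by blast
      then show False using \<open>p \<noteq> q\<close> by simp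
    qed
    then show False using half assms(2,3) by blast
  qed
qed



lemma finite_paths: "finite V \<Longrightarrow> finite {p. is_path V X u v p}"
proof -
  assume fV: "finite V"
  have "{p. is_path V X u v p} \<subseteq> {xs. set xs \<subseteq> V \<and> length xs \<le> card V}"
  proof
    fix p assume "p \<in> {p. is_path V X u v p}"
    then have d: "distinct p" and s: "set p \<subseteq> V" by (auto simp: is_path_def is_walk_def)
    have "length p = card (set p)" using d by (simp add: distinct_card)
    also have "\<dots> \<le> card V" using s fV by (rule card_mono[rotated])
    finally show "p \<in> {xs. set xs \<subseteq> V \<and> length xs \<le> card V}" using s by simp
  qed
  then show ?thesis using finite_lists_length_le[OF fV] finite_subset by blast
qed

lemma dist_attained:
  assumes "finite V" "connected_in V X u v"
  shows "\<exists>P. is_path V X u v P \<and> dist V X w u v = ereal (path_weight w P)"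
proof -
  let ?A = "(\<lambda>p. ereal (path_weight w p)) ` {p. is_path V X u v p}"
  have fin: "finite ?A" using finite_paths[OF assms(1)] by blast
  have ne: "?A \<noteq> {}" using assms(2) by (auto simp: connected_in_def)
  have "dist V X w u v = Inf ?A" by (simp add: dist_def)
  also have "\<dots> = Min ?A" using Min_Inf[OF fin ne] by simp
  finally have "dist V X w u v \<in> ?A" using Min_in[OF fin ne] by simp
  then obtain P where "is_path V X u v P" "dist V X w u v = ereal (path_weight w P)"
    by (auto simp only: image_iff mem_Collect_eq)
  then show ?thesis by blast
qed

lemma msf_contains_zero:
  assumes fin: "finite X" and msf: "min_spanning_forest V X c M" and ZX: "Z \<subseteq> X"
    and acZ: "acyclic_edges V Z" and c0: "\<forall>e\<in>Z. c e = 0" and cpos: "\<forall>e\<in>X-Z. c e > 0"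
    and eok: "edges_ok V X"
  shows "Z \<subseteq> M"
proof
  fix e assume eZ: "e \<in> Z"
  show "e \<in> M"
  proof (rule ccontr)
    assume eM: "e \<notin> M"
    have sf: "spanning_forest V X M" and mn: "\<forall>M'. spanning_forest V X M' \<longrightarrow> sum c M \<le> sum c M'"
      using msf by (auto simp: min_spanning_forest_def)
    have MX: "M \<subseteq> X" and acM: "acyclic_edges V M"
      and spM: "\<forall>u\<in>V. \<forall>v\<in>V. connected_in V X u v \<longrightarrow> connected_in V M u v"
      using sf by (auto simp: spanning_forest_def)
    have eX: "e \<in> X" using eZ ZX by blast
    obtain u v where uv: "u \<noteq> v" "u \<in> V" "v \<in> V" "e = {u,v}"
      using eok eX unfolding edges_ok_def by meson
    have "connected_in V X u v" using edge_connected[of u v X V] uv eZ ZX by auto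
    then obtain P where P: "is_path V M u v P" using spM uv by (auto simp: connected_in_def)
    have PM: "set (path_edges P) \<subseteq> M" using P by (simp add: is_path_def is_walk_def)
    have eP: "e \<notin> set (path_edges P)" using PM eM by blast
    have "\<not> set (path_edges P) \<subseteq> Z"
    proof
      assume sub: "set (path_edges P) \<subseteq> Z"
      then have "is_walk V (Z - {e}) P" using P eP by (auto simp: is_path_def is_walk_def)
      then have "connected_in V (Z - {e}) (hd P) (last P)" by (rule walk_connected)
      then have "connected_in V (Z - {{u,v}}) u v" using P uv by (simp add: is_path_def)
      then show False using acyc_no_alt[OF acZ] uv eZ by blast
    qed
    then obtain g where gP: "g \<in> set (path_edges P)" and gZ: "g \<notin> Z" by blast
    have gM: "g \<in> M" using gP PM by blast
    have cg: "c g > 0" using gM MX gZ cpos by blast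
    have ge: "g \<noteq> e" using gZ eZ by blast
    define M' where "M' = insert e (M - {g})"
    have M'X: "M' \<subseteq> X" using MX eZ ZX by (auto simp: M'_def)
    obtain P1 P2 where P12: "P = P1 @ P2" "P1 \<noteq> []" "P2 \<noteq> []" "g = {last P1, hd P2}"
      using path_edges_decomp gP by blast
    have pe: "path_edges P = path_edges P1 @ g # path_edges P2"
      using path_edges_append2[OF P12(2,3)] P12(1,4) by simp
    have "distinct (path_edges P)" using P by (intro path_edges_distinct) (simp add: is_path_def)
    then have n1: "g \<notin> set (path_edges P1)" and n2: "g \<notin> set (path_edges P2)" using pe by auto
    have gconn: "connected_in V M' (last P1) (hd P2)"
    proof -
      have w1: "is_walk V M' (rev P1)"
        using P P12 n1 pe by (auto simp: is_path_def is_walk_def path_edges_rev M'_def)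
      have c1: "connected_in V M' (last P1) u"
        using walk_connected[OF w1] P12 P by (simp add: is_path_def hd_rev last_rev)
      have c2: "connected_in V M' u v" using edge_connected[of u v M' V] uv by (simp add: M'_def)
      have w3: "is_walk V M' P2" using P P12 n2 pe by (auto simp: is_path_def is_walk_def M'_def)
      have "last P2 = v" using P P12 by (simp add: is_path_def)
      then have c3: "connected_in V M' v (hd P2)" using walk_connected[OF w3] connected_sym by metis
      show ?thesis using c1 c2 c3 connected_trans by metis
    qed
    have conn: "\<forall>a\<in>V. \<forall>b\<in>V. connected_in V X a b \<longrightarrow> connected_in V M' a b"
    proof (intro ballI impI)
      fix a b assume "a \<in> V" "b \<in> V" "connected_in V X a b"
      then have "connected_in V M a b" using spM by blast
      then show "connected_in V M' a b"
      proof (rule connected_lift[rotated])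
        fix x y assume xy: "{x,y} \<in> M" "x \<in> V" "y \<in> V"
        show "connected_in V M' x y"
        proof (cases "{x,y} = g")
          case False
          then have "{x,y} \<in> M'" using xy by (simp add: M'_def)
          then show ?thesis using edge_connected xy by metis
        next
          case True
          then have "(x = last P1 \<and> y = hd P2) \<or> (x = hd P2 \<and> y = last P1)"
            using P12(4) by (auto simp: doubleton_eq_iff)
          then show ?thesis using gconn connected_sym by metis
        qed
      qed
    qed
    have acyc: "acyclic_edges V M'"
      unfolding acyclic_edges_def
    proof
      assume "\<exists>C. is_cycle V M' C"
      then obtain C where C: "is_cycle V M' C" by blast
      show False
      proof (cases "e \<in> insert {last C, hd C} (set (path_edges C))")
        case True
        obtain x y where xy: "e = {x,y}" "x \<noteq> y" "connected_in V (M' - {e}) x y"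
          using cycle_edge_alt[OF C True] by blast
        have "M' - {e} \<subseteq> M - {g}" by (auto simp: M'_def)
        then have "connected_in V (M - {g}) x y" using connected_mono[OF xy(3)] by blast
        moreover have "{x,y} = {u,v}" using xy(1) uv(4) by simp
        then have "(x = u \<and> y = v) \<or> (x = v \<and> y = u)" by (simp add: doubleton_eq_iff)
        ultimately have "connected_in V (M - {g}) u v" using connected_sym by metis
        then obtain Q where Q: "is_path V (M - {g}) u v Q" by (auto simp: connected_in_def)
        then have "is_path V M u v Q" by (auto simp: is_path_def is_walk_def)
        then have "Q = P" using forest_path_unique[OF acM] P by blast
        then show False using Q gP by (auto simp: is_path_def is_walk_def)
      next
        case False
        then have "is_cycle V M C" using C by (auto simp: is_cycle_def is_walk_def M'_def)
        then show False using acM by (auto simp: acyclic_edges_def)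
      qed
    qed
    have "spanning_forest V X M'" using M'X conn acyc by (simp add: spanning_forest_def)
    then have le: "sum c M \<le> sum c M'" using mn by blast
    have finM: "finite M" using MX fin finite_subset by blast
    have "sum c M' = c e + sum c (M - {g})" using finM eM by (simp add: M'_def)
    also have "\<dots> = sum c M - c g" using c0 eZ sum.remove[OF finM gM, of c] by simp
    finally show False using le cg by simp
  qed
qed



theorem lemma2:
  fixes V :: "'v set" and E :: "'v set set" and w :: "'v set \<Rightarrow> real"
    and s t :: 'v and f :: nat and T F M :: "'v set set" and Ms :: "nat \<Rightarrow> 'v set set"
  assumes "finite V" and "edges_ok V E" and "\<forall>e\<in>E. w e > 0"
    and "s \<in> V" and "\<forall>u\<in>V. \<forall>v\<in>V. connected_in V E u v"
    and "f \<ge> 1"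
    and "sp_tree V E w s T"
    and "\<forall>i\<le>f. min_spanning_forest V (E - (\<Union>j<i. Ms j)) (w_prime V T w s) (Ms i)"
    and "F \<subseteq> E" and "card F \<le> f"
    and "t \<in> V" and "connected_in V (E - F) s t"
    and "min_spanning_forest V ((\<Union>i\<le>f. Ms i) - F) (w_prime V T w s) M"
  shows "(\<exists>p. is_path V M s t p) \<and>
    (\<forall>p. is_path V M s t p \<longrightarrow>
       dist V ((\<Union>i\<le>f. Ms i) - F) w s t \<le> ereal (path_weight w p) \<and>
       ereal (path_weight w p) \<le>
         ereal (\<Sum>e\<in>{e\<in>set (path_edges p). new_edge V T F e}. w_prime V T w s e)
           + dist V E w s t)"
  proof -
  let ?H = "\<Union>i\<le>f. Ms i"
  let ?X = "?H - F"
  let ?c = "w_prime V T w s"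
  let ?N = "\<lambda>q. {e\<in>set (path_edges q). new_edge V T F e}"
  define D where "D x = real_of_ereal (dist V T w s x)" for x
  have fV: "finite V" by fact
  have finE: "finite E"
  proof -
    have "E \<subseteq> Pow V" using assms(2) by (auto simp: edges_ok_def)
    then show ?thesis by (rule finite_subset) (simp add: fV)
  qed
  have TE: "T \<subseteq> E" and acT: "acyclic_edges V T" and Tconn: "\<forall>u\<in>V. \<forall>v\<in>V. connected_in V T u v"
    and Tdist: "\<forall>v\<in>V. dist V T w s v = dist V E w s v"
    using assms(7) by (auto simp: sp_tree_def)
  have wpos: "\<forall>e\<in>E. w e > 0" by fact
  have Dpath: "\<exists>P. is_path V T s x P \<and> D x = path_weight w P \<and> dist V T w s x = ereal (D x)"
    if x: "x \<in> V" for x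
  proof -
    obtain P where P: "is_path V T s x P" "dist V T w s x = ereal (path_weight w P)"
      using dist_attained[OF fV, of T s x w] Tconn assms(4) x by blast
    then show ?thesis by (intro exI[of _ P]) (simp add: D_def)
  qed
  have wT_nonneg: "\<forall>e\<in>T. w e \<ge> 0" using TE wpos by (auto intro: less_imp_le)
  have pw_nonneg: "path_weight w P \<ge> 0" if "is_path V T a b P" for a b P
    unfolding path_weight_def using wT_nonneg that
    by (intro sum_list_nonneg) (auto simp: is_path_def is_walk_def)
  have Dnn: "D x \<ge> 0" if "x \<in> V" for x using Dpath[OF that] pw_nonneg by metis
  have Ds: "D s = 0"
  proof -
    obtain P where P: "is_path V T s s P" "D s = path_weight w P" using Dpath assms(4) by blast
    then have "P = [s]" by (intro path_same_ends)
    then show ?thesis using P by (simp add: path_weight_def)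
  qed
  have cpos: "\<forall>e\<in>E-T. ?c e > 0"
  proof
    fix e assume e: "e \<in> E - T"
    have "e \<subseteq> V" using e assms(2) by (auto simp: edges_ok_def)
    then have "(\<Sum>u\<in>e. real_of_ereal (dist V T w s u)) \<ge> 0" using Dnn unfolding D_def
      by (intro sum_nonneg) auto
    moreover have "w e > 0" using e wpos by blast
    ultimately show "?c e > 0" using e by (simp add: w_prime_def)
  qed
  have c0: "\<forall>e\<in>T. ?c e = 0" by (simp add: w_prime_def)
  have Ms_sub: "Ms i \<subseteq> E - (\<Union>j<i. Ms j)" if "i \<le> f" for i
    using assms(8) that by (auto simp: min_spanning_forest_def spanning_forest_def)
  have msf0: "min_spanning_forest V E ?c (Ms 0)" using assms(8)[rule_format, of 0] by simp
  have T0: "T \<subseteq> Ms 0"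
    by (rule msf_contains_zero[OF finE msf0 TE acT c0 cpos assms(2)])
  have TH: "T \<subseteq> ?H" using T0 by auto
  have XE: "?X \<subseteq> E" using Ms_sub by blast
  have finX: "finite ?X" using XE finE finite_subset by blast
  have eokX: "edges_ok V ?X" using assms(2) XE by (auto simp: edges_ok_def)
  have TM: "T - F \<subseteq> M"
  proof (rule msf_contains_zero[OF finX assms(13)])
    show "T - F \<subseteq> ?X" using TH by blast
    show "acyclic_edges V (T - F)" using acT acyclic_mono by blast
    show "\<forall>e\<in>T - F. ?c e = 0" using c0 by blast
    show "\<forall>e\<in>?X - (T - F). ?c e > 0" using cpos XE by blast
    show "edges_ok V ?X" by (rule eokX)
  qed
  have MX: "M \<subseteq> ?X" and acM: "acyclic_edges V M"
    and spM: "\<forall>u\<in>V. \<forall>v\<in>V. connected_in V ?X u v \<longrightarrow> connected_in V M u v"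
    using assms(13) by (auto simp: min_spanning_forest_def spanning_forest_def)
  have finF: "finite F" using assms(9) finE finite_subset by blast
  have ft: "connected_in V ?X s t"
  proof (rule connected_lift[OF _ assms(12)])
    fix x y assume xy: "{x,y} \<in> E - F" "x \<in> V" "y \<in> V"
    show "connected_in V ?X x y"
    proof (cases "{x,y} \<in> ?H")
      case True
      then have "{x,y} \<in> ?X" using xy by blast
      then show ?thesis using edge_connected xy by metis
    next
      case False
      have ex: "\<exists>i\<le>f. connected_in V (Ms i - F) x y"
      proof (rule ccontr)
        assume nc: "\<not> ?thesis"
        have hit: "\<exists>g. g \<in> F \<and> g \<in> Ms i" if i: "i \<le> f" for i
        proof -
          have eXi: "{x,y} \<in> E - (\<Union>j<i. Ms j)" using xy False i by auto
          have "connected_in V (Ms i) x y"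
            using assms(8)[rule_format, OF i] edge_connected[OF eXi xy(2,3)] xy
            by (auto simp: min_spanning_forest_def spanning_forest_def)
          then obtain P where P: "is_path V (Ms i) x y P" by (auto simp: connected_in_def)
          show ?thesis
          proof (rule ccontr)
            assume "\<not> ?thesis"
            then have "is_path V (Ms i - F) x y P" using P by (auto simp: is_path_def is_walk_def)
            then show False using nc i by (auto simp: connected_in_def)
          qed
        qed
        define \<phi> where "\<phi> i = (SOME g. g \<in> F \<and> g \<in> Ms i)" for i
        have \<phi>: "\<phi> i \<in> F \<and> \<phi> i \<in> Ms i" if "i \<le> f" for i
          using someI_ex[OF hit[OF that]] unfolding \<phi>_def .
        have inj: "inj_on \<phi> {..f}"
        proof (rule inj_onI)
          fix i j assume ij: "i \<in> {..f}" "j \<in> {..f}" "\<phi> i = \<phi> j"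
          show "i = j"
          proof (rule ccontr)
            assume "i \<noteq> j"
            then consider "i < j" | "j < i" by linarith
            then show False
            proof cases
              case 1
              have "\<phi> j \<in> Ms j" using \<phi>[of j] ij(2) by simp
              moreover have "\<phi> j \<in> Ms i" using \<phi>[of i] ij(1,3) by simp
              ultimately show False using Ms_sub[of j] ij(2) 1 by auto
            next
              case 2
              have "\<phi> i \<in> Ms i" using \<phi>[of i] ij(1) by simp
              moreover have "\<phi> i \<in> Ms j" using \<phi>[of j] ij(2,3) by simp
              ultimately show False using Ms_sub[of i] ij(1) 2 by auto
            qed
          qed
        qed
        have "\<phi> ` {..f} \<subseteq> F" using \<phi> by auto
        then have "card {..f} \<le> card F" using card_inj_on_le[OF inj _ finF] by blast
        then show False using assms(10) by simp
      qed
      then obtain i where i: "i \<le> f" "connected_in V (Ms i - F) x y" by blast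
      have "Ms i - F \<subseteq> ?X" using i by auto
      then show ?thesis using connected_mono[OF i(2)] by blast
    qed
  qed
  have "connected_in V M s t" using spM assms(4,11) ft by blast
  then have exP: "\<exists>p. is_path V M s t p" unfolding connected_in_def .
  have claim: "\<forall>q a b. length q = n \<longrightarrow> is_path V M a b q \<longrightarrow>
      path_weight w q \<le> sum ?c (?N q) + D a + D b" for n
  proof (induction n rule: less_induct)
    case (less n)
    show ?case
    proof (intro allI impI)
      fix q a b assume len: "length q = n" and q: "is_path V M a b q"
      show "path_weight w q \<le> sum ?c (?N q) + D a + D b"
      proof (cases "?N q = {}")
        case False
        then obtain e where e: "e \<in> set (path_edges q)" "new_edge V T F e" by blast
        obtain q1 q2 where qq: "q = q1 @ q2" "q1 \<noteq> []" "q2 \<noteq> []" "e = {last q1, hd q2}"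
          using path_edges_decomp e(1) by blast
        have pe: "path_edges q = path_edges q1 @ e # path_edges q2"
          using path_edges_append2[OF qq(2,3)] qq(1,4) by simp
        have dq: "distinct q" using q by (simp add: is_path_def)
        have "distinct (path_edges q)" using dq by (rule path_edges_distinct)
        then have n1: "e \<notin> set (path_edges q1)" "e \<notin> set (path_edges q2)"
          and dis: "set (path_edges q1) \<inter> set (path_edges q2) = {}" using pe by auto
        have xy: "last q1 \<noteq> hd q2"
        proof -
          have "last q1 \<in> set q1" "hd q2 \<in> set q2" using qq by simp_all
          moreover have "set q1 \<inter> set q2 = {}" using dq qq by simp
          ultimately show ?thesis by (metis disjoint_iff)
        qed
        have q1p: "is_path V M a (last q1) q1"
          using q qq pe by (auto simp: is_path_def is_walk_def)
        have q2p: "is_path V M (hd q2) b q2"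
          using q qq pe by (auto simp: is_path_def is_walk_def)
        have l1: "length q1 < n" "length q2 < n" using len qq by auto
        have b1: "path_weight w q1 \<le> sum ?c (?N q1) + D a + D (last q1)"
          using less.IH[OF l1(1)] q1p by blast
        have b2: "path_weight w q2 \<le> sum ?c (?N q2) + D (hd q2) + D b"
          using less.IH[OF l1(2)] q2p by blast
        have xV: "last q1 \<in> V" "hd q2 \<in> V" using q1p q2p connected_V
          by (metis connected_in_def)+
        have eM: "e \<in> M" using q e(1) by (auto simp: is_path_def is_walk_def)
        have eT: "e \<notin> T"
        proof
          assume "e \<in> T"
          then have "e \<in> T - F" using eM MX by blast
          then have cxy: "connected_in V (T - F) (last q1) (hd q2)"
            using edge_connected xV qq(4) by metis
          obtain u v where uv: "e = {u,v}" "\<not> connected_in V (T - F) u v"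
            using e(2) by (auto simp: new_edge_def)
          have "{u,v} = {last q1, hd q2}" using uv qq by simp
          then have "(u = last q1 \<and> v = hd q2) \<or> (u = hd q2 \<and> v = last q1)"
            by (simp add: doubleton_eq_iff)
          then show False using cxy uv(2) connected_sym by metis
        qed
        have ce: "?c e = w e + D (last q1) + D (hd q2)"
          using eT xy by (simp add: w_prime_def qq(4) D_def)
        have wq: "path_weight w q = path_weight w q1 + w e + path_weight w q2"
          using path_weight_append2[OF qq(2,3)] qq(1,4) by simp
        have Nq: "?N q = insert e (?N q1 \<union> ?N q2)" using pe e(2) by auto
        have fin1: "finite (?N q1)" "finite (?N q2)" by auto
        have "sum ?c (?N q) = ?c e + sum ?c (?N q1 \<union> ?N q2)"
          using Nq n1 fin1 by simp
        also have "\<dots> = ?c e + sum ?c (?N q1) + sum ?c (?N q2)"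
          using dis fin1 by (simp add: sum.union_disjoint disjoint_iff)
        finally have sq: "sum ?c (?N q) = ?c e + sum ?c (?N q1) + sum ?c (?N q2)" .
        show ?thesis using b1 b2 ce wq sq by linarith
      next
        case True
        then have nn: "\<not> new_edge V T F e" if "e \<in> set (path_edges q)" for e using that by blast
        have wq: "is_walk V (set (path_edges q)) q" using q by (auto simp: is_path_def is_walk_def)
        have "connected_in V (T - F) (hd q) (last q)"
        proof (rule connected_lift_walk[OF _ wq])
          fix x y assume "{x,y} \<in> set (path_edges q)" "x \<in> V" "y \<in> V"
          then show "connected_in V (T - F) x y" using nn unfolding new_edge_def by blast
        qed
        then have "connected_in V (T - F) a b" using q by (simp add: is_path_def)
        then obtain r where r: "is_path V (T - F) a b r" by (auto simp: connected_in_def)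
        then have "is_path V M a b r" using TM by (auto simp: is_path_def is_walk_def)
        then have "r = q" using forest_path_unique[OF acM] q by blast
        then have qT: "is_path V T a b q" using r by (auto simp: is_path_def is_walk_def)
        have abV: "a \<in> V" "b \<in> V" using qT connected_V by (metis connected_in_def)+
        obtain Pa where Pa: "is_path V T s a Pa" "D a = path_weight w Pa" using Dpath abV by blast
        obtain Pb where Pb: "is_path V T s b Pb" "D b = path_weight w Pb" using Dpath abV by blast
        have nePa: "rev Pa \<noteq> []" and nePb: "Pb \<noteq> []"
          using Pa Pb by (auto simp: is_path_def is_walk_def)
        have lh: "last (rev Pa) = hd Pb" using Pa Pb nePa by (simp add: is_path_def last_rev)
        have w1: "is_walk V T (rev Pa)" using Pa(1) by (intro walk_rev) (simp add: is_path_def)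
        have w2: "is_walk V T Pb" using Pb by (simp add: is_path_def)
        have W: "is_walk V T (rev Pa @ tl Pb)" using walk_glue[OF w1 w2 lh] .
        have hW: "hd (rev Pa @ tl Pb) = a" using Pa nePa by (simp add: is_path_def hd_rev)
        have lW: "last (rev Pa @ tl Pb) = b" using glue_last[OF nePb lh] Pb by (simp add: is_path_def)
        have wW: "path_weight w (rev Pa @ tl Pb) = D a + D b"
          using path_weight_glue[OF nePa nePb lh] Pa Pb by (simp add: path_weight_rev)
        obtain r2 where r2: "is_path V T a b r2" "path_weight w r2 \<le> D a + D b"
          using walk_to_path[OF W wT_nonneg] hW lW wW by auto
        have "r2 = q" using forest_path_unique[OF acT r2(1) qT] .
        moreover have "sum ?c (?N q) = 0" by (simp only: True sum.empty)
        ultimately show ?thesis using r2 by simp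
      qed
    qed
  qed
  show ?thesis
  proof (intro conjI allI impI)
    show "\<exists>p. is_path V M s t p" by (rule exP)
  next
    fix p assume p: "is_path V M s t p"
    have pX: "is_path V ?X s t p" using p MX by (auto simp: is_path_def is_walk_def)
    show "dist V ?X w s t \<le> ereal (path_weight w p)"
      unfolding dist_def by (rule INF_lower) (use pX in simp)
  next
    fix p assume p: "is_path V M s t p"
    have "path_weight w p \<le> sum ?c (?N p) + D s + D t" using claim[of "length p"] p by blast
    moreover have "dist V E w s t = ereal (D t)" using Dpath[OF assms(11)] Tdist assms(11) by metis
    ultimately show "ereal (path_weight w p) \<le> ereal (sum ?c (?N p)) + dist V E w s t"
      using Ds by simp
  qed
qed


end
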